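(* Let $n\ge 3$ and let $\Gamma=\mathrm{W}(2^n,2)$, with vertex-set $\mathbb{Z}_{2^n}\times\mathbb{Z}_2$ where $(i,u)$ is adjacent to $(j,v)$ iff $i-j\in\{-1,1\}$. Let $\sigma$ and $\tau$ be the permutations of $\mathbb{Z}_{2^n}$ given by $\sigma=(1\,3\,5\,\ldots\,2^n-1)(0\,2\,4\,\ldots\,2^n-2)$ (i.e. $i\mapsto i+2$) and $\tau\colon i\mapsto -i+4$, acting on $\mathrm{V}(\Gamma)$ via the first coordinate (these are automorphisms of $\Gamma$). For $i\in\mathbb{Z}_{2^n}$, let $\alpha_i$ be the automorphism of $\Gamma$ interchanging $(i,0)$ and $(i,1)$ and fixing all other vertices. Let $x=\alpha_1\sigma$ and let $z$ be the product of all $\alpha_i$ with $i\not\equiv 1\pmod 4$, i.e. $z=\alpha_0\alpha_2\alpha_3\cdots\alpha_{2^n-4}\alpha_{2^n-2}\alpha_{2^n-1}$. Let $G=\langle x,\tau,z\rangle$. Then $G$ is a group of automorphisms of $\Gamma$ of order $2^{n+2}$ acting regularly on $\mathrm{E}(\Gamma)$, and every involution of $G$ fixes a vertex of $\Gamma$.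
   Context: Graphs are finite and simple. A group acts regularly on a set if it acts transitively with trivial point stabilisers. *)

theory Defs
  imports "HOL-Algebra.Algebra"
begin

definition WV :: "nat \<Rightarrow> (nat \<times> nat) set" where
  "WV n = {0..<2^n} \<times> {0..<2}"

definition Wadj :: "nat \<Rightarrow> nat \<times> nat \<Rightarrow> nat \<times> nat \<Rightarrow> bool" where
  "Wadj n a b \<longleftrightarrow> a \<in> WV n \<and> b \<in> WV n \<and>
     ((fst a + 1) mod 2^n = fst b \<or> (fst b + 1) mod 2^n = fst a)"

definition WE :: "nat \<Rightarrow> (nat \<times> nat) set set" where
  "WE n = {{a, b} | a b. Wadj n a b}"

definition WAut :: "nat \<Rightarrow> ((nat \<times> nat) \<Rightarrow> (nat \<times> nat)) set" where
  "WAut n = {f \<in> Bij (WV n). \<forall>a\<in>WV n. \<forall>b\<in>WV n. Wadj n (f a) (f b) \<longleftrightarrow> Wadj n a b}"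

definition wsigma :: "nat \<Rightarrow> (nat \<times> nat) \<Rightarrow> (nat \<times> nat)" where
  "wsigma n = restrict (\<lambda>(i, u). ((i + 2) mod 2^n, u)) (WV n)"

definition wtau :: "nat \<Rightarrow> (nat \<times> nat) \<Rightarrow> (nat \<times> nat)" where
  "wtau n = restrict (\<lambda>(i, u). ((4 + 2^n - i) mod 2^n, u)) (WV n)"

definition walpha :: "nat \<Rightarrow> nat \<Rightarrow> (nat \<times> nat) \<Rightarrow> (nat \<times> nat)" where
  "walpha n k = restrict (\<lambda>(i, u). if i = k then (i, 1 - u) else (i, u)) (WV n)"

text \<open>x = alpha_1 sigma, products read left to right (first alpha_1, then sigma).\<close>
definition wx :: "nat \<Rightarrow> (nat \<times> nat) \<Rightarrow> (nat \<times> nat)" where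
  "wx n = compose (WV n) (wsigma n) (walpha n 1)"

text \<open>z = product of all alpha_i with i not congruent 1 mod 4 (these commute).\<close>
definition wz :: "nat \<Rightarrow> (nat \<times> nat) \<Rightarrow> (nat \<times> nat)" where
  "wz n = restrict (\<lambda>(i, u). if i mod 4 \<noteq> 1 then (i, 1 - u) else (i, u)) (WV n)"

definition WG :: "nat \<Rightarrow> ((nat \<times> nat) \<Rightarrow> (nat \<times> nat)) set" where
  "WG n = generate (BijGroup (WV n)) {wx n, wtau n, wz n}"

end

theory Submission
  imports Defs
begin

definition Mi :: "nat \<Rightarrow> int" where "Mi n = 2^(n-1)"
definition Ni :: "nat \<Rightarrow> int" where "Ni n = 2^n"
definition Tc :: "nat \<Rightarrow> nat \<times> nat \<Rightarrow> int" where
  "Tc n v = ((int (fst v) - 3) div 2) mod Mi n + Mi n * int (snd v)"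
definition Ti :: "nat \<Rightarrow> int \<Rightarrow> nat \<times> nat" where
  "Ti n t = (nat (2 * ((t + 1) mod Mi n) + 1), if t mod Ni n < Mi n then 0 else 1)"
definition sg :: "bool \<Rightarrow> int" where "sg r = (if r then -1 else 1)"
definition am :: "nat \<Rightarrow> bool \<Rightarrow> bool \<Rightarrow> int" where
  "am n r f = sg r * (if f then 1 + Mi n else 1)"
definition colf :: "bool \<Rightarrow> int \<Rightarrow> int \<Rightarrow> int" where
  "colf r b i = (if r then 2*b + 6 - i else i + 2*b)"
definition Phi :: "nat \<Rightarrow> bool \<Rightarrow> bool \<Rightarrow> int \<Rightarrow> nat \<times> nat \<Rightarrow> nat \<times> nat" where
  "Phi n r f b = restrict (\<lambda>v. if odd (fst v) then Ti n (am n r f * Tc n v + b)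
     else (nat ((if r then 2*b + 6 - int (fst v) else int (fst v) + 2*b) mod Ni n),
           if f then 1 - snd v else snd v)) (WV n)"

lemma modI: "0 \<le> r \<Longrightarrow> r < m \<Longrightarrow> m dvd (x - r) \<Longrightarrow> x mod (m::int) = r"
  by (metis mod_eq_dvd_iff mod_pos_pos_trivial)

definition PS :: "nat \<Rightarrow> ((nat \<times> nat) \<Rightarrow> (nat \<times> nat)) set" where
  "PS n = {Phi n r f b | r f b. True}"

context fixes n :: nat assumes n3: "n \<ge> 3" begin

abbreviation "M \<equiv> Mi n"
abbreviation "N \<equiv> Ni n"
abbreviation "K \<equiv> (2::int)^(n-3)"

lemma K_facts: "M = 4 * K" "N = 8 * K"
proof -
  have "n - 1 = (n-3) + 2" "n = (n-3)+3" using n3 by auto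
  then have "M = 2^(n-3) * 2^2" "N = 2^(n-3) * 2^3" unfolding Mi_def Ni_def
    by (metis power_add)+
  then show "M = 4 * K" "N = 8 * K" by simp_all
qed

lemma NM: "N = 2 * M" using K_facts by simp
lemma Mpos: "M \<ge> 4" using K_facts by (simp add: mult_le_cancel_left1)
lemma MdvdN: "M dvd N" using NM by simp
lemma WV_iff: "v \<in> WV n \<longleftrightarrow> int (fst v) < N \<and> snd v < 2"
  by (cases v) (auto simp: WV_def Ni_def)

lemma Ti_WV: "Ti n t \<in> WV n" "odd (fst (Ti n t))"
proof -
  have M: "M \<ge> 4" "N = 2 * M" using Mpos NM by auto
  define r where "r = (t + 1) mod M"
  have r: "0 \<le> r" "r < M" using M unfolding r_def by auto
  show "Ti n t \<in> WV n" "odd (fst (Ti n t))" using r M unfolding Ti_def r_def[symmetric] WV_iff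
    by (auto simp: even_nat_iff)
qed

lemma Ti_cong: "t mod N = s mod N \<Longrightarrow> Ti n t = Ti n s"
proof -
  assume h: "t mod N = s mod N"
  have "(t + 1) mod M = (s + 1) mod M"
    by (metis MdvdN h mod_add_left_eq mod_mod_cancel)
  then show ?thesis using h unfolding Ti_def by simp
qed

lemma Tc_Ti: "Tc n (Ti n t) = t mod N"
proof -
  have M: "M \<ge> 4" "N = 2 * M" using Mpos NM by auto
  define r where "r = (t + 1) mod M"
  have r: "0 \<le> r" "r < M" using M unfolding r_def by auto
  have "fst (Ti n t) = nat (2*r+1)" unfolding Ti_def r_def by simp
  hence "(int (fst (Ti n t)) - 3) div 2 = r - 1" using r by simp
  moreover have "(r - 1) mod M = t mod M"
    unfolding r_def by (metis add_diff_cancel_right' mod_diff_left_eq)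
  ultimately have a: "Tc n (Ti n t) = t mod M + M * int (snd (Ti n t))" unfolding Tc_def by simp
  define s where "s = t mod N"
  have s: "0 \<le> s" "s < 2*M" using M unfolding s_def by auto
  have tm: "t mod M = s mod M" unfolding s_def by (simp add: MdvdN mod_mod_cancel)
  show ?thesis
  proof (cases "s < M")
    case True
    then show ?thesis using a s tm unfolding s_def[symmetric] by (simp add: Ti_def s_def)
  next
    case False
    have "s mod M = s - M" using False s by (intro modI) auto
    then show ?thesis using a s tm False unfolding s_def[symmetric] by (simp add: Ti_def s_def)
  qed
qed

lemma odd_vertex:
  assumes "v \<in> WV n" "odd (fst v)"
  obtains j u where "v = (2*j+1, u)" "int j < M" "u < 2"
proof -
  obtain j where j: "fst v = 2*j+1" using assms(2) oddE by blast
  have "int (2*j+1) < 2 * M" using assms(1) j NM by (simp add: WV_iff)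
  hence "int j < M" by simp
  then show ?thesis using that[of j "snd v"] j assms(1) by (cases v) (auto simp: WV_iff)
qed

lemma Tc_odd: "Tc n (2*j+1, u) = (int j - 1) mod M + M * int u"
proof -
  have "(int (2*j+1) - 3) div 2 = int j - 1" by simp
  then show ?thesis unfolding Tc_def by simp
qed

lemma Tc_range: assumes "v \<in> WV n" "odd (fst v)" shows "0 \<le> Tc n v" "Tc n v < N"
proof -
  obtain j u where v: "v = (2*j+1, u)" "int j < M" "u < 2" using odd_vertex assms by blast
  have "0 \<le> (int j - 1) mod M" "(int j - 1) mod M < M" using Mpos by auto
  moreover have "u = 0 \<or> u = 1" using v by auto
  ultimately show "0 \<le> Tc n v" "Tc n v < N" unfolding v Tc_odd NM by auto
qed

lemma Ti_Tc: assumes "v \<in> WV n" "odd (fst v)" shows "Ti n (Tc n v) = v"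
proof -
  obtain j u where v: "v = (2*j+1, u)" "int j < M" "u < 2" using odd_vertex assms by blast
  have r: "0 \<le> Tc n v" "Tc n v < N" using Tc_range assms by auto
  have e: "(int j - 1) mod M = int j - 1 - M * ((int j - 1) div M)"
    by (simp add: minus_div_mult_eq_mod[symmetric] mult.commute)
  have a: "(Tc n v + 1) mod M = int j"
  proof (rule modI)
    show "M dvd Tc n v + 1 - int j" unfolding v Tc_odd e
      by (rule dvdI[of _ _ "int u - (int j - 1) div M"]) (simp add: algebra_simps)
  qed (use v(2) in auto)
  have m: "0 \<le> (int j - 1) mod M" "(int j - 1) mod M < M" using Mpos by auto
  have b: "(Tc n v < M) = (u = 0)" unfolding v(1) Tc_odd using m v(3) by (cases u) auto
  show ?thesis using a b r unfolding Ti_def by (simp add: v nat_int_add) (use v(3) in auto)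
qed

lemma Ti_eq: assumes "v \<in> WV n" "odd (fst v)" "Tc n v mod N = t mod N" shows "Ti n t = v"
  using Ti_Tc[OF assms(1,2)] Ti_cong[OF assms(3)[symmetric]] by simp

lemma Tc_col: assumes "v \<in> WV n" "odd (fst v)" shows "(2 * Tc n v) mod N = (int (fst v) - 3) mod N"
proof -
  obtain j u where v: "v = (2*j+1, u)" "int j < M" "u < 2" using odd_vertex assms by blast
  have "2 * Tc n v = 2 * ((int j - 1) mod M) + N * int u" unfolding v Tc_odd NM by (simp add: algebra_simps)
  also have "2 * ((int j - 1) mod M) = (2 * (int j - 1)) mod N" unfolding NM by (simp add: mult_mod_right)
  finally have eq: "2 * Tc n v = (2 * (int j - 1)) mod N + N * int u" .
  have "2 * Tc n v mod N = (2 * (int j - 1)) mod N" unfolding eq by simp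
  then show ?thesis unfolding v by (simp add: algebra_simps)
qed

lemma fst_Ti: "int (fst (Ti n t)) = (2*t+3) mod N"
proof -
  have M: "M \<ge> 4" "N = 2 * M" using Mpos NM by auto
  define r where "r = (t + 1) mod M"
  have r: "0 \<le> r" "r < M" using M unfolding r_def by auto
  have "int (fst (Ti n t)) = 2*r+1" using r unfolding Ti_def r_def by simp
  moreover have "(2*t+3) mod N = 2*r+1"
  proof (rule modI)
    have "t + 1 - r = M * ((t+1) div M)" unfolding r_def by (simp add: minus_mod_eq_mult_div)
    hence "2*t+3 - (2*r+1) = N * ((t+1) div M)" using M by (simp add: algebra_simps)
    then show "N dvd 2*t+3 - (2*r+1)" by simp
  qed (use r M in auto)
  ultimately show ?thesis by simp
qed

lemma Phi_odd: "v \<in> WV n \<Longrightarrow> odd (fst v) \<Longrightarrow> Phi n r f b v = Ti n (am n r f * Tc n v + b)"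
  unfolding Phi_def by simp

lemma Phi_even: "v \<in> WV n \<Longrightarrow> even (fst v) \<Longrightarrow>
   Phi n r f b v = (nat (colf r b (int (fst v)) mod N), if f then 1 - snd v else snd v)"
  unfolding Phi_def colf_def by simp

lemma Phi_out: "v \<notin> WV n \<Longrightarrow> Phi n r f b v = undefined"
  unfolding Phi_def by simp

lemma am_2: "\<exists>c. 2 * am n r f = 2 * sg r + N * c"
  by (rule exI[of _ "if f then sg r else 0"]) (auto simp: am_def NM algebra_simps)

lemma am_mult: "\<exists>c. am n r f * am n r' f' = am n (r \<noteq> r') (f \<noteq> f') + N * c"
proof -
  have sq: "(1 + M) * (1 + M) = 1 + N * (1 + 2 * K)" using K_facts by (simp add: algebra_simps)
  show ?thesis
    by (rule exI[of _ "if f \<and> f' then sg (r \<noteq> r') * (1 + 2*K) else 0"])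
       (cases r; cases r'; cases f; cases f'; simp add: am_def sg_def K_facts algebra_simps)
qed

lemma modN_range: "0 \<le> x mod N" "x mod N < N"
  using Mpos NM by auto

lemma evenN: "even N" unfolding NM by simp

lemma Phi_WV: assumes "v \<in> WV n"
  shows "Phi n r f b v \<in> WV n" "even (fst (Phi n r f b v)) = even (fst v)"
proof -
  have "Phi n r f b v \<in> WV n \<and> even (fst (Phi n r f b v)) = even (fst v)"
  proof (cases "odd (fst v)")
    case True
    then show ?thesis using Ti_WV assms by (simp add: Phi_odd)
  next
    case False
    have "even (colf r b (int (fst v)))" using False unfolding colf_def by auto
    then have e: "even (colf r b (int (fst v)) mod N)" using evenN by (simp add: dvd_mod)
    have "snd v < 2" using assms WV_iff by auto
    then show ?thesis using False assms e modN_range[of "colf r b (int (fst v))"]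
      by (auto simp: Phi_even WV_iff even_nat_iff)
  qed
  then show "Phi n r f b v \<in> WV n" "even (fst (Phi n r f b v)) = even (fst v)" by auto
qed

lemma dvd_modE: assumes "x mod N = y mod N" obtains c where "x = y + N * c"
proof -
  have "N dvd x - y" using assms by (simp add: mod_eq_dvd_iff)
  then obtain c where "x - y = N * c" by (auto elim: dvdE)
  then show ?thesis using that[of c] by (simp add: algebra_simps)
qed

lemma colPhi: assumes "v \<in> WV n"
  shows "int (fst (Phi n r f b v)) = colf r b (int (fst v)) mod N"
proof (cases "odd (fst v)")
  case True
  obtain c1 where c1: "2 * am n r f = 2 * sg r + N * c1" using am_2 by blast
  obtain c2 where c2: "2 * Tc n v = int (fst v) - 3 + N * c2" using Tc_col[OF assms True] by (rule dvd_modE)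
  have "2 * (am n r f * Tc n v + b) + 3 = (2 * am n r f) * Tc n v + 2*b + 3" by (simp add: algebra_simps)
  also have "\<dots> = sg r * (2 * Tc n v) + N * c1 * Tc n v + 2*b + 3" unfolding c1 by (simp add: algebra_simps)
  also have "\<dots> = colf r b (int (fst v)) + N * (sg r * c2 + c1 * Tc n v)"
    unfolding c2 colf_def sg_def by (cases r) (simp_all add: algebra_simps)
  finally show ?thesis using assms True by (simp add: Phi_odd fst_Ti)
next
  case False
  then show ?thesis using assms modN_range by (simp add: Phi_even)
qed

lemma Phi_comp: assumes "v \<in> WV n"
  shows "Phi n r f b (Phi n r' f' b' v) = Phi n (r \<noteq> r') (f \<noteq> f') (am n r f * b' + b) v"
proof (cases "odd (fst v)")
  case True
  have w: "Phi n r' f' b' v \<in> WV n" "odd (fst (Phi n r' f' b' v))" using Phi_WV[OF assms] True by auto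
  obtain c where c: "am n r f * am n r' f' = am n (r \<noteq> r') (f \<noteq> f') + N * c" using am_mult by blast
  have "(am n r f * ((am n r' f' * Tc n v + b') mod N) + b) mod N
      = (am n r f * (am n r' f' * Tc n v + b') + b) mod N" by (metis mod_add_left_eq mod_mult_right_eq)
  also have "am n r f * (am n r' f' * Tc n v + b') + b
      = (am n r f * am n r' f') * Tc n v + (am n r f * b' + b)"
    by (simp add: algebra_simps)
  also have "\<dots> = am n (r \<noteq> r') (f \<noteq> f') * Tc n v + (am n r f * b' + b) + N * (c * Tc n v)"
    unfolding c by (simp add: algebra_simps)
  finally have "(am n r f * ((am n r' f' * Tc n v + b') mod N) + b) mod N
      = (am n (r \<noteq> r') (f \<noteq> f') * Tc n v + (am n r f * b' + b)) mod N" by simp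
  then show ?thesis using assms True w
    by (simp add: Phi_odd Tc_Ti) (rule Ti_cong)
next
  case False
  have w: "Phi n r' f' b' v \<in> WV n" "even (fst (Phi n r' f' b' v))" using Phi_WV[OF assms] False by auto
  obtain c1 where c1: "2 * am n r f = 2 * sg r + N * c1" using am_2 by blast
  define y where "y = colf r' b' (int (fst v))"
  have ym: "y mod N = y - N * (y div N)" by (simp add: minus_div_mult_eq_mod[symmetric] mult.commute)
  have a1: "colf r b (y mod N) = colf r b y - sg r * N * (y div N)"
    unfolding ym colf_def sg_def by (cases r) (simp_all add: algebra_simps)
  have a2: "colf r b y = colf (r \<noteq> r') (sg r * b' + b) (int (fst v))"
    unfolding y_def colf_def sg_def by (cases r; cases r') (simp_all add: algebra_simps)
  have cs: "\<And>R B x i. colf R (B + x) i = colf R B i + 2 * x" unfolding colf_def by simp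
  have m: "2 * (am n r f * b' - sg r * b') = N * c1 * b'"
    using arg_cong[OF c1, of "\<lambda>x. x * b'"] by (simp add: algebra_simps)
  have a3: "colf (r \<noteq> r') (am n r f * b' + b) (int (fst v)) = colf (r \<noteq> r') (sg r * b' + b) (int (fst v)) + N * c1 * b'"
    using cs[of "r \<noteq> r'" "sg r * b' + b" "am n r f * b' - sg r * b'" "int (fst v)"] m by (simp add: add.commute)
  have "colf r b (y mod N) = colf (r \<noteq> r') (am n r f * b' + b) (int (fst v)) + N * (- sg r * (y div N) - c1 * b')"
    using a1 a2 a3 by (simp add: algebra_simps)
  then have col: "colf r b (y mod N) mod N = colf (r \<noteq> r') (am n r f * b' + b) (int (fst v)) mod N"
    by simp
  have u: "snd v < 2" using assms WV_iff by auto
  show ?thesis using assms False w col u modN_range[of y]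
    by (auto simp: Phi_even y_def)
qed

lemma modNI: "x = y + N * c \<Longrightarrow> x mod N = y mod N"
  by (simp add: mod_mult_self2)

lemma Phi_cong: assumes "b mod N = b' mod N" shows "Phi n r f b = Phi n r f b'"
proof
  fix v
  obtain c where c: "b = b' + N * c" using assms by (rule dvd_modE)
  show "Phi n r f b v = Phi n r f b' v"
  proof (cases "v \<in> WV n")
    case False then show ?thesis by (simp add: Phi_out)
  next
    case v: True
    show ?thesis
    proof (cases "odd (fst v)")
      case True
      have "am n r f * Tc n v + b = (am n r f * Tc n v + b') + N * c"
        unfolding c by (simp add: algebra_simps)
      then have "(am n r f * Tc n v + b) mod N = (am n r f * Tc n v + b') mod N"
        by (rule modNI)
      then have "Ti n (am n r f * Tc n v + b) = Ti n (am n r f * Tc n v + b')" by (rule Ti_cong)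
      then show ?thesis using v True by (simp add: Phi_odd)
    next
      case False
      have "colf r b (int (fst v)) = colf r b' (int (fst v)) + N * (2 * c)"
        unfolding c colf_def by (simp add: algebra_simps)
      then show ?thesis using v False by (simp add: Phi_even)
    qed
  qed
qed

lemma one_BG: "\<one>\<^bsub>BijGroup (WV n)\<^esub> = (\<lambda>x\<in>WV n. x)"
  by (simp add: BijGroup_def)

lemma Phi_one: "Phi n False False 0 = \<one>\<^bsub>BijGroup (WV n)\<^esub>"
proof
  fix v
  show "Phi n False False 0 v = \<one>\<^bsub>BijGroup (WV n)\<^esub> v"
  proof (cases "v \<in> WV n")
    case False then show ?thesis by (simp add: Phi_out one_BG)
  next
    case v: True
    show ?thesis
    proof (cases "odd (fst v)")
      case True
      then show ?thesis using v by (simp add: Phi_odd one_BG am_def sg_def Ti_Tc)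
    next
      case False
      have "int (fst v) < N" using v WV_iff by auto
      then show ?thesis using v False by (simp add: Phi_even one_BG colf_def)
    qed
  qed
qed

lemma am_sq: "(am n r f * am n r f) mod N = 1"
proof -
  obtain c where "am n r f * am n r f = am n False False + N * c" using am_mult[of r f r f] by auto
  moreover have "am n False False = 1" by (simp add: am_def sg_def)
  moreover have "1 mod N = 1" using Mpos NM by simp
  ultimately show ?thesis by simp
qed

lemma Phi_invpair: assumes "v \<in> WV n"
  shows "Phi n r f (- (am n r f * b)) (Phi n r f b v) = v"
        "Phi n r f b (Phi n r f (- (am n r f * b)) v) = v"
proof -
  have "Phi n r f (- (am n r f * b)) (Phi n r f b v) = Phi n False False 0 v"
    using Phi_comp[OF assms] by simp
  then show "Phi n r f (- (am n r f * b)) (Phi n r f b v) = v" using assms by (simp add: Phi_one one_BG)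
  have "(am n r f * - (am n r f * b) + b) mod N = 0 mod N"
  proof -
    obtain c where c: "am n r f * am n r f = am n False False + N * c"
      using am_mult[of r f r f] by auto
    have "am n False False = 1" by (simp add: am_def sg_def)
    then have "am n r f * - (am n r f * b) + b = 0 + N * (- c * b)"
      using c by (simp add: algebra_simps)
    then show ?thesis by (rule modNI)
  qed
  then have "Phi n False False (am n r f * - (am n r f * b) + b) = Phi n False False 0" by (rule Phi_cong)
  then have "Phi n r f b (Phi n r f (- (am n r f * b)) v) = Phi n False False 0 v"
    using Phi_comp[OF assms, of r f b r f "- (am n r f * b)"] by simp
  then show "Phi n r f b (Phi n r f (- (am n r f * b)) v) = v" using assms by (simp add: Phi_one one_BG)
qed

lemma Bij_Phi: "Phi n r f b \<in> Bij (WV n)"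
proof -
  have "bij_betw (Phi n r f b) (WV n) (WV n)"
    by (rule bij_betw_byWitness[of _ "Phi n r f (- (am n r f * b))"])
       (auto simp: Phi_invpair Phi_WV)
  then show ?thesis unfolding Bij_def Phi_def by simp
qed

lemma mult_Phi: "Phi n r f b \<otimes>\<^bsub>BijGroup (WV n)\<^esub> Phi n r' f' b' = Phi n (r \<noteq> r') (f \<noteq> f') (am n r f * b' + b)"
proof -
  have "Phi n r f b \<otimes>\<^bsub>BijGroup (WV n)\<^esub> Phi n r' f' b' = compose (WV n) (Phi n r f b) (Phi n r' f' b')"
    using Bij_Phi by (simp add: BijGroup_def)
  also have "\<dots> = Phi n (r \<noteq> r') (f \<noteq> f') (am n r f * b' + b)"
  proof
    fix v show "compose (WV n) (Phi n r f b) (Phi n r' f' b') v = Phi n (r \<noteq> r') (f \<noteq> f') (am n r f * b' + b) v"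
      by (cases "v \<in> WV n") (simp_all add: compose_def Phi_comp Phi_out)
  qed
  finally show ?thesis .
qed

lemma am_modN: "am n r f mod N = (if r then (if f then M - 1 else N - 1) else (if f then 1 + M else 1))"
  using Mpos NM by (cases r; cases f) (auto simp: am_def sg_def intro!: modI)

lemma am_inj: "am n r f mod N = am n r' f' mod N \<Longrightarrow> r = r' \<and> f = f'"
  unfolding am_modN using Mpos NM by (cases r; cases f; cases r'; cases f') auto

lemma Tc_Phi_odd: "v \<in> WV n \<Longrightarrow> odd (fst v) \<Longrightarrow> Tc n (Phi n r f b v) = (am n r f * Tc n v + b) mod N"
  by (simp add: Phi_odd Tc_Ti)

lemma Phi_inj: assumes "Phi n r f b = Phi n r' f' b'" shows "r = r' \<and> f = f' \<and> b mod N = b' mod N"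
proof -
  have t0: "Tc n (Ti n 0) = 0" "Tc n (Ti n 1) = 1" using Tc_Ti Mpos NM by auto
  have "Tc n (Phi n r f b (Ti n 0)) = Tc n (Phi n r' f' b' (Ti n 0))" using assms by simp
  then have bb: "b mod N = b' mod N" using Ti_WV by (simp add: Tc_Phi_odd t0)
  have "Tc n (Phi n r f b (Ti n 1)) = Tc n (Phi n r' f' b' (Ti n 1))" using assms by simp
  then have "(am n r f + b) mod N = (am n r' f' + b') mod N" using Ti_WV by (simp add: Tc_Phi_odd t0)
  then have "(am n r f + b - b) mod N = (am n r' f' + b' - b') mod N" using bb by (metis mod_diff_cong)
  then have "am n r f mod N = am n r' f' mod N" by simp
  then show ?thesis using am_inj bb by blast
qed

lemma pow_nat: "(2::nat)^n = 2 * nat M" "int (nat M) = M" "N = int ((2::nat)^n)"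
proof -
  show "int (nat M) = M" using Mpos by simp
  have "N = int ((2::nat)^n)" unfolding Ni_def by simp
  then show "N = int ((2::nat)^n)" .
  have "int ((2::nat)^n) = int (2 * nat M)" using NM \<open>N = int ((2::nat)^n)\<close> Mpos by simp
  then show "(2::nat)^n = 2 * nat M" by (simp only: of_nat_eq_iff)
qed

lemma WV_nat: "v \<in> WV n \<longleftrightarrow> fst v < 2 * nat M \<and> snd v < 2"
  by (cases v) (auto simp: WV_def pow_nat(1))

lemma odd_vertex':
  assumes "v \<in> WV n" "odd (fst v)"
  obtains j u where "v = (2*j+1, u)" "j < nat M" "u < 2"
proof -
  obtain j where j: "fst v = 2*j+1" using assms(2) oddE by blast
  then show ?thesis using that[of j "snd v"] j assms(1) by (cases v) (auto simp: WV_nat)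
qed

lemma wx_val: "v \<in> WV n \<Longrightarrow> wx n v = ((fst v + 2) mod 2^n, if fst v = 1 then 1 - snd v else snd v)"
  by (cases v) (auto simp: wx_def compose_def wsigma_def walpha_def WV_def)

lemma wx_Phi: "wx n = Phi n False False 1"
proof
  fix v
  show "wx n v = Phi n False False 1 v"
  proof (cases "v \<in> WV n")
    case False
    then show ?thesis by (simp add: Phi_out wx_def compose_def)
  next
    case v: True
    have M4: "nat M \<ge> 4" using Mpos by linarith
    have m2: "(-2) mod M = M - 2" using Mpos by (intro modI) auto
    show ?thesis
    proof (cases "odd (fst v)")
      case True
      obtain j u where ju: "v = (2*j+1, u)" "j < nat M" "u < 2" using odd_vertex' v True by blast
      have wv: "wx n v = ((fst v + 2) mod 2^n, if fst v = 1 then 1 - snd v else snd v)" by (rule wx_val[OF v])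
      have w0: "wx n v \<in> WV n \<and> odd (fst (wx n v)) \<and> Tc n (wx n v) mod N = (Tc n v + 1) mod N"
      proof -
        consider "j = 0" | "j = nat M - 1" | "0 < j" "j < nat M - 1" using ju by linarith
        then show "wx n v \<in> WV n \<and> odd (fst (wx n v)) \<and> Tc n (wx n v) mod N = (Tc n v + 1) mod N"
        proof cases
          case 1
          have e1: "wx n v = (2*1+1, 1 - u)" using wv ju 1 M4 by (simp add: pow_nat)
          moreover have "Tc n (2*1+1, 1-u) = (Tc n v + 1) + N * (- int u)"
            using ju 1 Mpos NM by (simp add: Tc_def zmod_minus1 of_nat_diff algebra_simps)
          ultimately have "Tc n (wx n v) = (Tc n v + 1) + N * (- int u)" by simp
          from modNI[OF this] show ?thesis using ju M4 e1 by (simp add: WV_nat del: Tc_odd)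
        next
          case 2
          have "fst v + 2 = 2^n + 1" using ju 2 M4 by (simp add: pow_nat)
          then have "(fst v + 2) mod 2^n = (1 + 2^n) mod 2^n" by simp
          also have "\<dots> = 1 mod 2^n" by (rule mod_add_self2)
          also have "\<dots> = 1" using M4 pow_nat(1) by simp
          finally have "(fst v + 2) mod 2^n = 1" .
          then have "wx n v = (2*0+1, u)" using wv ju 2 M4 by simp
          moreover have "Tc n (2*0+1, u) = (Tc n v + 1)"
            using ju 2 Mpos NM pow_nat(2) m2 by (simp add: Tc_def zmod_minus1 of_nat_diff algebra_simps)
          ultimately show ?thesis using ju M4 by (simp add: WV_nat del: Tc_odd)
        next
          case 3
          have "wx n v = (2*(j+1)+1, u)" using wv ju 3 M4 by (simp add: pow_nat)
          moreover have "Tc n (2*(j+1)+1, u) = (Tc n v + 1)"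
            unfolding ju(1) Tc_odd using 3 Mpos pow_nat(2) by (simp add: of_nat_diff algebra_simps)
          ultimately show ?thesis using ju M4 3 by (simp add: WV_nat del: Tc_odd)
        qed
      qed
      then have w: "wx n v \<in> WV n" "odd (fst (wx n v))" "Tc n (wx n v) mod N = (Tc n v + 1) mod N" by auto
      have "Ti n (Tc n v + 1) = wx n v" using Ti_eq[OF w(1,2,3)] .
      then show ?thesis using v True by (simp add: Phi_odd am_def sg_def)
    next
      case False
      have "int ((fst v + 2) mod 2^n) = (int (fst v) + 2) mod N" using pow_nat(3) by (simp add: zmod_int add.commute)
      then have "(fst v + 2) mod 2^n = nat ((int (fst v) + 2) mod N)" by simp
      then show ?thesis using v False by (auto simp: Phi_even wx_val colf_def)
    qed
  qed
qed

lemma odd_Phi_eq: assumes "v \<in> WV n" "odd (fst v)" "w \<in> WV n" "odd (fst w)"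
  "Tc n w = am n r f * Tc n v + b + N * c" shows "Phi n r f b v = w"
proof -
  have "Tc n w mod N = (am n r f * Tc n v + b) mod N" using assms(5) by (rule modNI)
  then show ?thesis using Ti_eq[OF assms(3,4)] assms(1,2) by (simp add: Phi_odd)
qed

lemma mod_pow_add: "k < 2^n \<Longrightarrow> ((2::nat)^n + k) mod 2^n = k"
  by (metis mod_add_self1 mod_less)

lemma wtau_val: "v \<in> WV n \<Longrightarrow> wtau n v = ((4 + 2^n - fst v) mod 2^n, snd v)"
  by (cases v) (auto simp: wtau_def)

lemma wz_val: "v \<in> WV n \<Longrightarrow> wz n v = (if fst v mod 4 \<noteq> 1 then (fst v, 1 - snd v) else v)"
  by (cases v) (auto simp: wz_def)

lemma wtau_Phi: "wtau n = Phi n True False (M - 1)"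
proof
  fix v
  show "wtau n v = Phi n True False (M - 1) v"
  proof (cases "v \<in> WV n")
    case False
    then show ?thesis by (simp add: Phi_out wtau_def)
  next
    case v: True
    have M4: "nat M \<ge> 4" using Mpos by linarith
    have wv: "wtau n v = ((4 + 2^n - fst v) mod 2^n, snd v)" by (rule wtau_val[OF v])
    show ?thesis
    proof (cases "odd (fst v)")
      case True
      obtain j u where ju: "v = (2*j+1, u)" "j < nat M" "u < 2" using odd_vertex' v True by blast
      consider "j = 0" | "j = 1" | "2 \<le> j" by linarith
      then show ?thesis
      proof cases
        case 1
        have "4 + 2^n - fst v = 2^n + 3" using ju 1 M4 by (simp add: pow_nat)
        moreover have "(2^n + 3) mod 2^n = (3::nat)" using M4 pow_nat(1) by (intro mod_pow_add) simp
        ultimately have "(4 + 2^n - fst v) mod 2^n = 3" by simp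
        then have e: "wtau n v = (2*1+1, u)" using wv ju by simp
        have "Tc n (2*1+1, u) = am n True False * Tc n v + (M - 1) + N * int u"
          using ju 1 Mpos NM by (simp add: Tc_def am_def sg_def zmod_minus1 algebra_simps)
        from odd_Phi_eq[OF v True _ _ this] show ?thesis using e ju M4 by (simp add: WV_nat)
      next
        case 2
        have "4 + 2^n - fst v = 2^n + 1" using ju 2 M4 by (simp add: pow_nat)
        moreover have "(2^n + 1) mod 2^n = (1::nat)" using M4 pow_nat(1) by (intro mod_pow_add) simp
        ultimately have "(4 + 2^n - fst v) mod 2^n = 1" by simp
        then have e: "wtau n v = (2*0+1, u)" using wv ju by simp
        have "Tc n (2*0+1, u) = am n True False * Tc n v + (M - 1) + N * int u"
          using ju 2 Mpos NM by (simp add: Tc_def am_def sg_def zmod_minus1 algebra_simps)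
        from odd_Phi_eq[OF v True _ _ this] show ?thesis using e ju M4 by (simp add: WV_nat)
      next
        case 3
        have "4 + 2^n - fst v = 2 * (nat M - j + 1) + 1" using ju 3 M4 by (simp add: pow_nat)
        moreover have "2 * (nat M - j + 1) + 1 < 2^n" using ju 3 M4 by (simp add: pow_nat)
        ultimately have e: "wtau n v = (2 * (nat M - j + 1) + 1, u)" using wv ju by simp
        have mj: "(- int j) mod M = M - int j" "(M - int j) mod M = M - int j"
          using ju 3 Mpos by (auto intro!: modI)
        have "Tc n (2 * (nat M - j + 1) + 1, u) = am n True False * Tc n v + (M - 1) + N * int u"
          unfolding ju(1) Tc_odd using ju 3 Mpos NM pow_nat(2) mj by (simp add: am_def sg_def of_nat_diff algebra_simps)
        from odd_Phi_eq[OF v True _ _ this] show ?thesis using e ju M4 3 by (simp add: WV_nat)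
      qed
    next
      case False
      have lt: "fst v < 2^n" using v WV_def by auto
      have "int ((4 + 2^n - fst v) mod 2^n) = (4 + N - int (fst v)) mod N"
        using pow_nat(3) lt by (simp add: zmod_int of_nat_diff)
      moreover have "colf True (M - 1) (int (fst v)) = 4 + N - int (fst v)" unfolding colf_def NM by simp
      ultimately show ?thesis using v False wv by (simp add: Phi_even)
    qed
  qed
qed

lemma wz_Phi: "wz n = Phi n False True M"
proof
  fix v
  show "wz n v = Phi n False True M v"
  proof (cases "v \<in> WV n")
    case False
    then show ?thesis by (simp add: Phi_out wz_def)
  next
    case v: True
    have wv: "wz n v = (if fst v mod 4 \<noteq> 1 then (fst v, 1 - snd v) else v)" by (rule wz_val[OF v])
    have MM: "M * M = N * (2 * K)" using K_facts by simp
    show ?thesis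
    proof (cases "odd (fst v)")
      case True
      obtain j u where ju: "v = (2*j+1, u)" "j < nat M" "u < 2" using odd_vertex' v True by blast
      consider "j = 0" | "even j" "j \<noteq> 0" | "odd j" by blast
      then show ?thesis
      proof cases
        case 1
        have e: "wz n v = (2*0+1, u)" using wv ju 1 by simp
        have "Tc n (2*0+1, u) = am n False True * Tc n v + M + N * (- 2 * K * (1 + int u))"
          using ju 1 Mpos NM MM by (simp add: Tc_def am_def sg_def zmod_minus1 algebra_simps)
        from odd_Phi_eq[OF v True _ _ this] show ?thesis using e ju Mpos by (simp add: WV_nat)
      next
        case 22: 2
        obtain l where 2: "j = 2*l" "l \<ge> 1" using 22 by (metis evenE less_one mult_is_0 not_le)
        have "(2 * j + 1) mod 4 = 1" using 2 by (simp add: mod_mult_right_eq[symmetric])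
        then have e: "wz n v = (2*j+1, u)" using wv ju by simp
        have "Tc n (2*j+1, u) = am n False True * Tc n v + M + N * (- int l - 2 * K * int u)"
          unfolding ju(1) Tc_odd using ju 2 Mpos NM MM by (simp add: am_def sg_def of_nat_diff algebra_simps)
        from odd_Phi_eq[OF v True _ _ this] show ?thesis using e ju by (simp add: WV_nat)
      next
        case 33: 3
        obtain l where 3: "j = 2*l+1" using 33 oddE by blast
        have "(2 * j + 1) mod 4 = 3" using 3 by (simp add: mod_mult_right_eq[symmetric])
        then have e: "wz n v = (2*j+1, 1 - u)" using wv ju by simp
        have "Tc n (2*j+1, 1 - u) = am n False True * Tc n v + M + N * (- int l - int u - 2 * K * int u)"
          unfolding ju(1) Tc_odd using ju 3 Mpos NM MM by (simp add: am_def sg_def of_nat_diff algebra_simps)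
        from odd_Phi_eq[OF v True _ _ this] show ?thesis using e ju by (simp add: WV_nat)
      qed
    next
      case False
      have "fst v mod 4 \<noteq> 1" using False by (metis dvd_mod_iff even_numeral odd_one)
      moreover have "int (fst v) < N" using v WV_iff by auto
      moreover have "colf False M (int (fst v)) = int (fst v) + N" unfolding colf_def NM by simp
      ultimately show ?thesis using v False wv by (simp add: Phi_even)
    qed
  qed
qed

lemma PS_sub: "PS n \<subseteq> carrier (BijGroup (WV n))"
  using Bij_Phi by (auto simp: PS_def BijGroup_def)

lemma inv_Phi: "inv\<^bsub>BijGroup (WV n)\<^esub> (Phi n r f b) = Phi n r f (- (am n r f * b))"
proof -
  have "Phi n r f (- (am n r f * b)) \<otimes>\<^bsub>BijGroup (WV n)\<^esub> Phi n r f b = \<one>\<^bsub>BijGroup (WV n)\<^esub>"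
    by (simp add: mult_Phi Phi_one[symmetric])
  then show ?thesis using Bij_Phi
    by (intro group.inv_equality[OF group_BijGroup]) (auto simp: BijGroup_def)
qed

lemma PS_subgroup: "subgroup (PS n) (BijGroup (WV n))"
proof (rule group.subgroupI[OF group_BijGroup])
  show "PS n \<subseteq> carrier (BijGroup (WV n))" by (rule PS_sub)
  show "PS n \<noteq> {}" unfolding PS_def by blast
  fix a b assume a: "a \<in> PS n" and b: "b \<in> PS n"
  then show "inv\<^bsub>BijGroup (WV n)\<^esub> a \<in> PS n" unfolding PS_def by (auto simp: inv_Phi) blast
  show "a \<otimes>\<^bsub>BijGroup (WV n)\<^esub> b \<in> PS n" using a b unfolding PS_def by (auto simp: mult_Phi) blast
qed

lemma WG_sub_PS: "WG n \<subseteq> PS n"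
  unfolding WG_def
proof (rule group.generate_subgroup_incl[OF group_BijGroup _ PS_subgroup])
  show "{wx n, wtau n, wz n} \<subseteq> PS n" unfolding PS_def wx_Phi wtau_Phi wz_Phi by blast
qed

lemma PS_sub_WG: "PS n \<subseteq> WG n"
proof
  fix g assume "g \<in> PS n"
  then obtain r f b where g: "g = Phi n r f b" unfolding PS_def by blast
  have gen: "x \<in> {wx n, wtau n, wz n} \<Longrightarrow> x \<in> WG n" for x unfolding WG_def by (rule generate.incl)
  have pw: "Phi n False False (int k) \<in> WG n" for k
  proof (induction k)
    case 0
    have "Phi n False False 0 \<in> generate (BijGroup (WV n)) {wx n, wtau n, wz n}"
      unfolding Phi_one by (rule generate.one)
    then show ?case unfolding WG_def by simp
  next
    case (Suc k)
    have "wx n \<otimes>\<^bsub>BijGroup (WV n)\<^esub> Phi n False False (int k) \<in> WG n"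
      using gen[of "wx n"] Suc unfolding WG_def by (intro generate.eng) auto
    moreover have "wx n \<otimes>\<^bsub>BijGroup (WV n)\<^esub> Phi n False False (int k) = Phi n False False (int (Suc k))"
      unfolding wx_Phi mult_Phi by (simp add: am_def sg_def add.commute)
    ultimately show ?case by simp
  qed
  obtain c where c: "Phi n r f c \<in> WG n"
  proof (cases r; cases f)
    assume "r" "f"
    have "wtau n \<otimes>\<^bsub>BijGroup (WV n)\<^esub> wz n \<in> WG n"
      using gen unfolding WG_def by (intro generate.eng) auto
    moreover have "wtau n \<otimes>\<^bsub>BijGroup (WV n)\<^esub> wz n = Phi n True True (-1)"
      unfolding wtau_Phi wz_Phi mult_Phi by (simp add: am_def sg_def)
    ultimately show ?thesis using that \<open>r\<close> \<open>f\<close> by auto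
  next
    assume "r" "\<not> f" then show ?thesis using that gen[of "wtau n"] by (auto simp: wtau_Phi)
  next
    assume "\<not> r" "f" then show ?thesis using that gen[of "wz n"] by (auto simp: wz_Phi)
  next
    assume "\<not> r" "\<not> f" then show ?thesis using that pw[of 0] by auto
  qed
  define k where "k = nat ((b - c) mod N)"
  have k: "int k = (b - c) mod N" unfolding k_def using modN_range by simp
  have "Phi n False False (int k) \<otimes>\<^bsub>BijGroup (WV n)\<^esub> Phi n r f c \<in> WG n"
    using pw c unfolding WG_def by (intro generate.eng) auto
  moreover have "Phi n False False (int k) \<otimes>\<^bsub>BijGroup (WV n)\<^esub> Phi n r f c = Phi n r f (c + int k)"
    unfolding mult_Phi by (simp add: am_def sg_def add.commute)
  moreover have "(c + int k) mod N = b mod N" unfolding k by (simp add: mod_simps)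
  ultimately show "g \<in> WG n" unfolding g using Phi_cong by metis
qed

lemma WG_PS: "WG n = PS n" using WG_sub_PS PS_sub_WG by blast

lemma PS_img: "PS n = (\<lambda>(r,f,k). Phi n r f (int k)) ` (UNIV \<times> UNIV \<times> {0..<2^n})"
proof
  show "(\<lambda>(r,f,k). Phi n r f (int k)) ` (UNIV \<times> UNIV \<times> {0..<2^n}) \<subseteq> PS n"
    unfolding PS_def by auto
  show "PS n \<subseteq> (\<lambda>(r,f,k). Phi n r f (int k)) ` (UNIV \<times> UNIV \<times> {0..<2^n})"
  proof
    fix g assume "g \<in> PS n"
    then obtain r f b where g: "g = Phi n r f b" unfolding PS_def by blast
    define k where "k = nat (b mod N)"
    have k: "int k = b mod N" "k < 2^n" unfolding k_def using modN_range[of b] pow_nat(3) by auto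
    have "Phi n r f b = Phi n r f (int k)" using k(1) by (intro Phi_cong) simp
    then show "g \<in> (\<lambda>(r,f,k). Phi n r f (int k)) ` (UNIV \<times> UNIV \<times> {0..<2^n})"
      unfolding g using k(2) by (auto intro!: image_eqI[of _ _ "(r,f,k)"])
  qed
qed

lemma card_PS: "card (PS n) = 2 ^ (n + 2)"
proof -
  have "inj_on (\<lambda>(r,f,k). Phi n r f (int k)) (UNIV \<times> UNIV \<times> {0..<2^n})"
  proof (rule inj_onI)
    fix x y assume x: "x \<in> UNIV \<times> UNIV \<times> {0..<(2::nat)^n}" and y: "y \<in> UNIV \<times> UNIV \<times> {0..<(2::nat)^n}"
      and exy: "(\<lambda>(r,f,k). Phi n r f (int k)) x = (\<lambda>(r,f,k). Phi n r f (int k)) y"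
    obtain r f k where xx: "x = (r,f,k)" by (cases x) auto
    obtain r' f' k' where yy: "y = (r',f',k')" by (cases y) auto
    have k: "k < 2^n" "k' < 2^n" using x y xx yy by auto
    have e: "Phi n r f (int k) = Phi n r' f' (int k')" using exy xx yy by simp
    from Phi_inj[OF e] have "r = r'" "f = f'" "int k mod N = int k' mod N" by auto
    moreover have "int k mod N = int k" "int k' mod N = int k'" using k pow_nat(3) by auto
    ultimately show "x = y" using xx yy by simp
  qed
  then have "card (PS n) = card (UNIV \<times> UNIV \<times> {0..<(2::nat)^n} :: (bool \<times> bool \<times> nat) set)"
    unfolding PS_img by (rule card_image)
  also have "\<dots> = 2 * 2 * 2^n" by (simp add: card_cartesian_product)
  finally show ?thesis by (simp add: power_add)
qed

lemma adj_iff: "a \<in> WV n \<Longrightarrow> b \<in> WV n \<Longrightarrow>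
   ((fst a + 1) mod 2^n = fst b) \<longleftrightarrow> N dvd (int (fst a) + 1 - int (fst b))"
proof -
  assume a: "a \<in> WV n" and b: "b \<in> WV n"
  have "int (fst b) < N" using b WV_iff by auto
  then have bm: "int (fst b) mod N = int (fst b)" by simp
  have "((fst a + 1) mod 2^n = fst b) \<longleftrightarrow> int ((fst a + 1) mod 2^n) = int (fst b)" by linarith
  also have "\<dots> \<longleftrightarrow> (int (fst a) + 1) mod N = int (fst b) mod N"
    using pow_nat(3) bm by (simp add: zmod_int add.commute)
  also have "\<dots> \<longleftrightarrow> N dvd (int (fst a) + 1 - int (fst b))" by (rule mod_eq_dvd_iff)
  finally show ?thesis .
qed

lemma dvd_mods: "N dvd (x mod N + 1 - y mod N) \<longleftrightarrow> N dvd (x + 1 - y)"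
proof -
  have "x mod N + 1 - y mod N = (x + 1 - y) + N * (y div N - x div N)"
    by (simp add: minus_div_mult_eq_mod[symmetric] algebra_simps)
  then show ?thesis by (metis dvd_add_left_iff dvd_triv_left)
qed

lemma Wadj_iff: "Wadj n a b \<longleftrightarrow> a \<in> WV n \<and> b \<in> WV n \<and>
   (N dvd (int (fst a) + 1 - int (fst b)) \<or> N dvd (int (fst b) + 1 - int (fst a)))"
  unfolding Wadj_def using adj_iff by blast

lemma Phi_adj: assumes "a \<in> WV n" "b \<in> WV n"
  shows "Wadj n (Phi n r f c a) (Phi n r f c b) \<longleftrightarrow> Wadj n a b"
proof -
  have w: "Phi n r f c a \<in> WV n" "Phi n r f c b \<in> WV n" using Phi_WV assms by auto
  have d: "N dvd (int (fst (Phi n r f c x)) + 1 - int (fst (Phi n r f c y))) \<longleftrightarrow>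
       (if r then N dvd (int (fst y) + 1 - int (fst x)) else N dvd (int (fst x) + 1 - int (fst y)))"
    if "x \<in> WV n" "y \<in> WV n" for x y
  proof -
    have "N dvd (int (fst (Phi n r f c x)) + 1 - int (fst (Phi n r f c y))) \<longleftrightarrow>
        N dvd (colf r c (int (fst x)) + 1 - colf r c (int (fst y)))"
      unfolding colPhi[OF that(1)] colPhi[OF that(2)] by (rule dvd_mods)
    then show ?thesis unfolding colf_def by (cases r) (simp_all add: algebra_simps)
  qed
  show ?thesis unfolding Wadj_iff using d[OF assms] d[OF assms(2,1)] w assms by (cases r) auto
qed

lemma PS_WAut: "PS n \<subseteq> WAut n"
  unfolding PS_def WAut_def using Bij_Phi Phi_adj by auto

lemma edge_split: assumes "e \<in> WE n"
  obtains p q where "e = {p, q}" "p \<in> WV n" "q \<in> WV n" "odd (fst p)" "even (fst q)"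
    "N dvd (int (fst p) + 1 - int (fst q)) \<or> N dvd (int (fst q) + 1 - int (fst p))"
proof -
  obtain a b where e: "e = {a, b}" and ab: "Wadj n a b" using assms unfolding WE_def by blast
  have w: "a \<in> WV n" "b \<in> WV n" and d: "N dvd (int (fst a) + 1 - int (fst b)) \<or> N dvd (int (fst b) + 1 - int (fst a))"
    using ab Wadj_iff by auto
  have "even (int (fst a) + 1 - int (fst b)) \<or> even (int (fst b) + 1 - int (fst a))"
    using d evenN dvd_trans by blast
  then have par: "odd (fst a) \<longleftrightarrow> even (fst b)" by auto
  show ?thesis
  proof (cases "odd (fst a)")
    case True
    then show ?thesis using that[of a b] e w d par by auto
  next
    case False
    then show ?thesis using that[of b a] e w d par by (auto simp: insert_commute)
  qed
qed

lemma Tc_10: "Tc n (Suc 0, 0) = M - 1" "Tc n (1, 0) = M - 1"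
  using Mpos by (simp_all add: Tc_def zmod_minus1)

lemma e0_WV: "(0,0) \<in> WV n" "(1,0) \<in> WV n"
  using Mpos NM by (auto simp: WV_iff)

lemma reach: assumes "e \<in> WE n" shows "\<exists>r f b. Phi n r f b ` {(0,0),(1,0)} = e"
proof -
  obtain p q where e: "e = {p, q}" and pq: "p \<in> WV n" "q \<in> WV n" "odd (fst p)" "even (fst q)"
    and d: "N dvd (int (fst p) + 1 - int (fst q)) \<or> N dvd (int (fst q) + 1 - int (fst p))"
    using edge_split[OF assms] by blast
  define r where "r = (N dvd (int (fst p) + 1 - int (fst q)))"
  define f where "f = (snd q = 1)"
  define t where "t = Tc n p"
  define b where "b = t - am n r f * (M - 1)"
  have g1: "Phi n r f b (1,0) = p"
  proof -
    have "Phi n r f b (1,0) = Ti n (am n r f * (M - 1) + b)" using e0_WV by (simp add: Phi_odd Tc_10)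
    also have "\<dots> = p" unfolding b_def t_def using Ti_Tc pq by simp
    finally show ?thesis .
  qed
  have g0: "Phi n r f b (0,0) = q"
  proof -
    obtain c1 where c1: "2 * am n r f = 2 * sg r + N * c1" using am_2 by blast
    obtain c2 where c2: "2 * Tc n p = int (fst p) - 3 + N * c2" using Tc_col[OF pq(1,3)] by (rule dvd_modE)
    have "colf r b 0 mod N = int (fst q)"
    proof -
      have cb: "colf r b 0 = (if r then int (fst p) + 1 else int (fst p) - 1) + N * (c2 - c1 * (M - 1) - sg r)"
      proof -
        have b2: "2 * b = (int (fst p) - 3 + N * c2) - (2 * sg r + N * c1) * (M - 1)"
          unfolding b_def t_def c1[symmetric] c2[symmetric] by (simp add: algebra_simps)
        show ?thesis unfolding colf_def using b2 NM by (cases r) (simp_all add: sg_def algebra_simps)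
      qed
      have "(if r then int (fst p) + 1 else int (fst p) - 1) mod N = int (fst q) mod N"
      proof -
        have "N dvd (int (fst p) - 1 - int (fst q))" if "N dvd (int (fst q) + 1 - int (fst p))"
          using that dvd_minus_iff[of N "int (fst q) + 1 - int (fst p)"] by (simp add: algebra_simps)
        then show ?thesis using d unfolding r_def by (auto simp: mod_eq_dvd_iff)
      qed
      moreover have "int (fst q) mod N = int (fst q)" using pq WV_iff by auto
      ultimately show ?thesis unfolding cb by simp
    qed
    moreover have "snd q < 2" using pq WV_iff by auto
    ultimately show ?thesis using e0_WV unfolding f_def by (cases q) (auto simp: Phi_even)
  qed
  show ?thesis using g0 g1 e by (intro exI[of _ r] exI[of _ f] exI[of _ b]) auto
qed

lemma img_comp: "e \<subseteq> WV n \<Longrightarrow> Phi n (r \<noteq> r') (f \<noteq> f') (am n r f * b' + b) ` e = Phi n r f b ` (Phi n r' f' b' ` e)"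
proof -
  assume eW: "e \<subseteq> WV n"
  have "Phi n (r \<noteq> r') (f \<noteq> f') (am n r f * b' + b) ` e = (\<lambda>v. Phi n r f b (Phi n r' f' b' v)) ` e"
    by (rule image_cong) (use eW Phi_comp in auto)
  then show ?thesis by (simp add: image_image)
qed

lemma trans_PS: assumes "e \<in> WE n" "e' \<in> WE n" shows "\<exists>g\<in>PS n. g ` e = e'"
proof -
  obtain r f b where g: "Phi n r f b ` {(0,0),(1,0)} = e" using reach[OF assms(1)] by blast
  obtain r' f' b' where g': "Phi n r' f' b' ` {(0,0),(1,0)} = e'" using reach[OF assms(2)] by blast
  define h where "h = Phi n r f (- (am n r f * b))"
  have eW: "e \<subseteq> WV n" using g e0_WV Phi_WV by auto
  have "h ` e = (\<lambda>v. h (Phi n r f b v)) ` {(0,0),(1,0)}" unfolding g[symmetric] by (simp add: image_image)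
  also have "\<dots> = {(0,0),(1,0)}" unfolding h_def using Phi_invpair(1) e0_WV by simp
  finally have he: "h ` e = {(0,0),(1,0)}" .
  have "Phi n (r' \<noteq> r) (f' \<noteq> f) (am n r' f' * (- (am n r f * b)) + b') ` e = Phi n r' f' b' ` (h ` e)"
    unfolding h_def by (rule img_comp[OF eW])
  also have "\<dots> = e'" using he g' by simp
  finally show ?thesis unfolding PS_def by blast
qed

lemma stab_PS: assumes "e \<in> WE n" "g \<in> PS n" "g ` e = e" shows "g = \<one>\<^bsub>BijGroup (WV n)\<^esub>"
proof -
  obtain p q where e: "e = {p, q}" and pq: "p \<in> WV n" "q \<in> WV n" "odd (fst p)" "even (fst q)"
    and d: "N dvd (int (fst p) + 1 - int (fst q)) \<or> N dvd (int (fst q) + 1 - int (fst p))"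
    using edge_split[OF assms(1)] by blast
  obtain r f b where g: "g = Phi n r f b" using assms(2) unfolding PS_def by blast
  have "g p \<in> {p, q}" "g q \<in> {p, q}" using assms(3) e by auto
  moreover have "odd (fst (g p))" "even (fst (g q))" using Phi_WV pq g by auto
  ultimately have gp: "g p = p" and gq: "g q = q" using pq by auto
  have "snd q < 2" using pq WV_iff by auto
  moreover have "snd (g q) = (if f then 1 - snd q else snd q)" using pq unfolding g by (simp add: Phi_even)
  ultimately have nf: "\<not> f" using gq by (cases f) (auto, arith)
  have ip: "int (fst p) = colf r b (int (fst p)) mod N" using colPhi[OF pq(1), of r f b] gp g by simp
  have iq: "int (fst q) = colf r b (int (fst q)) mod N" using colPhi[OF pq(2), of r f b] gq g by simp
  show ?thesis
  proof (cases r)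
    case False
    have tp: "Tc n p = (am n r f * Tc n p + b) mod N" using Tc_Phi_odd[OF pq(1,3), of r f b] gp g by simp
    have "Tc n p mod N = Tc n p" using Tc_range[OF pq(1,3)] by simp
    then have "(Tc n p + b) mod N = (Tc n p + 0) mod N" using tp False nf by (simp add: am_def sg_def)
    then have "N dvd b" by (simp add: mod_eq_dvd_iff)
    then have "b mod N = 0 mod N" by simp
    then have "Phi n r f b = Phi n r f 0" by (rule Phi_cong)
    then show ?thesis unfolding g using False nf Phi_one by simp
  next
    case True
    have a: "N dvd (colf r b (int (fst p)) - int (fst p))" using ip by (metis mod_eq_dvd_iff mod_mod_trivial)
    have b: "N dvd (colf r b (int (fst q)) - int (fst q))" using iq by (metis mod_eq_dvd_iff mod_mod_trivial)
    have "N dvd 2 * (int (fst q) - int (fst p))"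
      using dvd_diff[OF a b] True unfolding colf_def by (simp add: algebra_simps)
    moreover have "N dvd 2 * (int (fst p) + 1 - int (fst q)) \<or> N dvd 2 * (int (fst q) + 1 - int (fst p))"
      using d
    proof (rule disjE)
      assume "N dvd (int (fst p) + 1 - int (fst q))"
      then have "N dvd 2 * (int (fst p) + 1 - int (fst q))" by (rule dvd_mult)
      then show ?thesis ..
    next
      assume "N dvd (int (fst q) + 1 - int (fst p))"
      then have "N dvd 2 * (int (fst q) + 1 - int (fst p))" by (rule dvd_mult)
      then show ?thesis ..
    qed
    moreover have "2 = 2 * (int (fst p) + 1 - int (fst q)) + 2 * (int (fst q) - int (fst p))"
      "2 = 2 * (int (fst q) + 1 - int (fst p)) - 2 * (int (fst q) - int (fst p))" by simp_all
    ultimately have "N dvd 2" by (metis dvd_add dvd_diff)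
    then show ?thesis using Mpos NM zdvd_imp_le[of N 2] by simp
  qed
qed

lemma fix_odd: assumes "am n r f * t + b = t + N * c" shows "\<exists>v\<in>WV n. Phi n r f b v = v"
proof (intro bexI)
  have "(am n r f * (t mod N) + b) mod N = (am n r f * t + b) mod N"
    by (metis mod_add_left_eq mod_mult_right_eq)
  also have "\<dots> = t mod N" using assms by (rule modNI)
  finally have "Ti n (am n r f * (t mod N) + b) = Ti n t" by (rule Ti_cong)
  then show "Phi n r f b (Ti n t) = Ti n t" using Ti_WV by (simp add: Phi_odd Tc_Ti)
  show "Ti n t \<in> WV n" by (rule Ti_WV)
qed

lemma invol_PS: assumes "g \<in> PS n" "g \<noteq> \<one>\<^bsub>BijGroup (WV n)\<^esub>"
  "g \<otimes>\<^bsub>BijGroup (WV n)\<^esub> g = \<one>\<^bsub>BijGroup (WV n)\<^esub>"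
  shows "\<exists>v\<in>WV n. g v = v"
proof -
  obtain r f b where g: "g = Phi n r f b" using assms(1) unfolding PS_def by blast
  have "Phi n False False (am n r f * b + b) = Phi n False False 0"
    using assms(3) unfolding g mult_Phi Phi_one[symmetric] by simp
  from Phi_inj[OF this] have "N dvd (am n r f * b + b)" by (simp add: dvd_eq_mod_eq_0)
  then obtain c where c: "am n r f * b + b = N * c" by (auto elim: dvdE)
  have KK: "M = 4 * K" "N = 8 * K" "K > 0" using K_facts by auto
  show ?thesis
  proof (cases r; cases f)
    assume rf: "\<not> r" "\<not> f"
    have "2 * b = N * c" using c rf by (simp add: am_def sg_def)
    then have "colf False b 0 mod N = 0" unfolding colf_def by simp
    then have "Phi n r f b (0,0) = (0,0)" using rf e0_WV by (simp add: Phi_even)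
    then show ?thesis unfolding g using e0_WV by blast
  next
    assume rf: "r" "\<not> f"
    show ?thesis
    proof (cases "even b")
      case True
      then obtain c' where b: "b = 2 * c'" by (auto elim: evenE)
      have "am n r f * c' + b = c' + N * 0" using rf b by (simp add: am_def sg_def)
      then show ?thesis unfolding g by (rule fix_odd)
    next
      case False
      define i where "i = (b + 3) mod N"
      have i: "0 \<le> i" "i < N" unfolding i_def using modN_range by auto
      have "even (b + 3)" using False by simp
      then have ie: "even i" unfolding i_def using evenN by (simp add: dvd_mod)
      have v: "(nat i, 0) \<in> WV n" using i by (simp add: WV_iff)
      have "colf True b i mod N = i"
      proof -
        have "i = b + 3 - N * ((b + 3) div N)" unfolding i_def by (simp add: minus_div_mult_eq_mod[symmetric] mult.commute)
        then have "colf True b i = i + N * (2 * ((b + 3) div N))" unfolding colf_def by (simp add: algebra_simps)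
        then show ?thesis using i by simp
      qed
      then have "Phi n r f b (nat i, 0) = (nat i, 0)" using rf v ie i by (simp add: Phi_even even_nat_iff)
      then show ?thesis unfolding g using v by blast
    qed
  next
    assume rf: "\<not> r" "f"
    have "(2 + 4 * K) * b = 8 * K * c" using c rf KK by (simp add: am_def sg_def algebra_simps)
    then have "(1 + 2 * K) * b = 4 * K * c" by (simp add: algebra_simps)
    then have "(1 - 2 * K) * ((1 + 2 * K) * b) = (1 - 2 * K) * (4 * K * c)" by simp
    then have bb: "b = 4 * K * (c * (1 - 2 * K) + K * b)" by (simp add: algebra_simps)
    define k where "k = c * (1 - 2 * K) + K * b"
    have "am n r f * k + b = k + N * k" using rf KK bb unfolding k_def[symmetric]
      by (simp add: am_def sg_def algebra_simps)
    then show ?thesis unfolding g by (rule fix_odd)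
  next
    assume rf: "r" "f"
    have "- (M * b) = N * c" using c rf by (simp add: am_def sg_def algebra_simps)
    then have "M * (- b) = M * (2 * c)" using NM by (simp add: algebra_simps)
    moreover have M0: "M \<noteq> 0" using Mpos by simp
    ultimately have "- b = 2 * c" by (simp only: mult_cancel_left simp_thms)
    then have bb: "b = 2 * (- c)" by simp
    define t where "t = (1 + 2 * K) * (- c)"
    have "am n r f * t + b = t + N * ((1 + K) * c)" using rf KK bb unfolding t_def
      by (simp add: am_def sg_def algebra_simps)
    then show ?thesis unfolding g by (rule fix_odd)
  qed
qed

end

theorem lemma4p1:
  fixes n :: nat
  assumes "n \<ge> 3"
  shows "WG n \<subseteq> WAut n
    \<and> card (WG n) = 2 ^ (n + 2)
    \<and> (\<forall>e\<in>WE n. \<forall>e'\<in>WE n. \<exists>g\<in>WG n. g ` e = e')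
    \<and> (\<forall>e\<in>WE n. \<forall>g\<in>WG n. g ` e = e \<longrightarrow> g = \<one>\<^bsub>BijGroup (WV n)\<^esub>)
    \<and> (\<forall>g\<in>WG n. g \<noteq> \<one>\<^bsub>BijGroup (WV n)\<^esub> \<and> g \<otimes>\<^bsub>BijGroup (WV n)\<^esub> g = \<one>\<^bsub>BijGroup (WV n)\<^esub>
         \<longrightarrow> (\<exists>v\<in>WV n. g v = v))"
  using WG_PS[OF assms] PS_WAut[OF assms] card_PS[OF assms] trans_PS[OF assms]
    stab_PS[OF assms] invol_PS[OF assms]
  by auto

end
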